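(* There exist absolute constants $\kappa_D>0$ and $C>0$ such that, for diffusive deposition, every configuration $\sigma\in\mathbb N^N$ with $|\sigma|<N/2$ and every $i\in G_N$, $$P\big(\text{explorer attaches to pile } i\,\big|\,\sigma\big)\ge\kappa_D\frac{\sigma_i^2+1}{N}\exp\Big(-\frac3N\Big(\sum_{j=1}^N\sigma_j(\sigma_j+1)\Big)\Big(1+C\frac{|\sigma|}{N}\Big)\Big).$$
   Context: Diffusive deposition: for $N\ge2$, $G_N=\{1,\dots,N\}$, a configuration $\sigma\in\mathbb N^N$ gives column (pile) heights, $|\sigma|=\sum_i\sigma_i$. Given $\sigma$, an explorer is a walk $(X_n,Z_n)_{n\ge0}$ with $(X_n)$ i.i.d. uniform on $G_N$, $Z_0=\max_i\sigma_i+1$, and $(Z_{n+1}-Z_n)$ i.i.d. uniform on $\{-1,1\}$ independent of $(X_n)$. With $n^*=\inf\{n:Z_n\le\sigma_{X_n}\}$, the explorer attaches to pile $X_{n^*}$ (whose height then increases by one). *)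

theory Defs
  imports "HOL-Probability.Probability"
begin

text \<open>Piles are indexed by G_N = {1..N}; a configuration is sigma :: nat => nat,
  only its values on {1..N} matter. The explorer's randomness is an i.i.d. sequence
  of pairs (X_n, xi_n), X_n uniform on {1..N}, xi_n uniform on {-1,1}, independent.\<close>

definition explorer_space :: "nat \<Rightarrow> (nat \<times> int) stream measure" where
  "explorer_space N =
     stream_space (measure_pmf (pair_pmf (pmf_of_set {1..N}) (pmf_of_set {-1, 1::int})))"

definition explorer_X :: "(nat \<times> int) stream \<Rightarrow> nat \<Rightarrow> nat" where
  "explorer_X \<omega> n = fst (\<omega> !! n)"

definition explorer_Z :: "nat \<Rightarrow> (nat \<Rightarrow> nat) \<Rightarrow> (nat \<times> int) stream \<Rightarrow> nat \<Rightarrow> int" where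
  "explorer_Z N \<sigma> \<omega> n = int (Max (\<sigma> ` {1..N})) + 1 + (\<Sum>k<n. snd (\<omega> !! k))"

definition attach_event :: "nat \<Rightarrow> (nat \<Rightarrow> nat) \<Rightarrow> nat \<Rightarrow> (nat \<times> int) stream set" where
  "attach_event N \<sigma> i =
     {\<omega> \<in> space (explorer_space N). \<exists>n.
        (\<forall>m<n. explorer_Z N \<sigma> \<omega> m > int (\<sigma> (explorer_X \<omega> m))) \<and>
        explorer_Z N \<sigma> \<omega> n \<le> int (\<sigma> (explorer_X \<omega> n)) \<and>
        explorer_X \<omega> n = i}"

definition attach_prob :: "nat \<Rightarrow> (nat \<Rightarrow> nat) \<Rightarrow> nat \<Rightarrow> real" where
  "attach_prob N \<sigma> i = measure (explorer_space N) (attach_event N \<sigma> i)"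

end

theory Submission
  imports Defs
begin


function lam :: "nat \<Rightarrow> (nat \<Rightarrow> real) \<Rightarrow> nat \<Rightarrow> real" where
  "lam M a k = (if M < k then 1 else a k / (2 - a k * lam M a (Suc k)))"
  by auto
termination by (relation "Wellfounded.measure (\<lambda>(M,a,k). Suc M - k)") auto

function mu :: "nat \<Rightarrow> (nat \<Rightarrow> real) \<Rightarrow> (nat \<Rightarrow> real) \<Rightarrow> nat \<Rightarrow> real" where
  "mu M a b k = (if M < k then 0 else (2 * b k + a k * mu M a b (Suc k)) / (2 - a k * lam M a (Suc k)))"
  by auto
termination by (relation "Wellfounded.measure (\<lambda>(M,a,b,k). Suc M - k)") auto

declare lam.simps[simp del] mu.simps[simp del]

lemma lam_bounds:
  assumes a: "\<And>k. 0 < a k \<and> a k \<le> 1"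
  shows "0 \<le> lam M a k \<and> lam M a k \<le> 1"
  using a
proof (induction M a k rule: lam.induct)
  case (1 M a k)
  show ?case
  proof (cases "M < k")
    case True then show ?thesis by (simp add: lam.simps)
  next
    case False
    define x where "x = lam M a (Suc k)"
    have x: "0 \<le> x" "x \<le> 1" using 1 False x_def by auto
    have ak: "0 < a k" "a k \<le> 1" using "1.prems" by auto
    have pos: "2 - a k * x \<ge> 1" using x ak by (smt (verit) mult_le_one)
    have "a k / (2 - a k * x) \<le> 1" using pos ak x
      by (smt (verit, best) divide_le_eq_1 mult_le_cancel_left1 mult_left_le)
    moreover have "0 \<le> a k / (2 - a k * x)" using pos ak by simp
    ultimately show ?thesis using False by (simp add: lam.simps[of M a k] x_def)
  qed
qed

lemma lam_step:
  assumes a: "\<And>k. 0 < a k \<and> a k \<le> 1" and k: "k \<le> M"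
  shows "lam M a k \<ge> a k ^ 2 * lam M a (Suc k)"
proof -
  define x where "x = lam M a (Suc k)"
  have x: "0 \<le> x" "x \<le> 1" using lam_bounds[OF a] x_def by auto
  have ak: "0 < a k" "a k \<le> 1" using a by auto
  have pos: "2 - a k * x \<ge> 1" using x ak by (smt (verit) mult_le_one)
  have "a k ^ 2 * x * (2 - a k * x) \<le> a k"
  proof -
    have "a k - a k ^ 2 * x * (2 - a k * x) = a k * (1 - a k * x)^2"
      by (simp add: power2_eq_square algebra_simps)
    moreover have "a k * (1 - a k * x)^2 \<ge> 0" using ak by simp
    ultimately show ?thesis by linarith
  qed
  hence "a k ^ 2 * x \<le> a k / (2 - a k * x)" using pos by (simp add: le_divide_eq)
  thus ?thesis using k by (simp add: lam.simps[of M a k] x_def)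
qed

lemma mu_nonneg:
  assumes a: "\<And>k. 0 < a k \<and> a k \<le> 1" and b: "\<And>k. 0 \<le> b k"
  shows "0 \<le> mu M a b k"
  using a b
proof (induction M a b k rule: mu.induct)
  case (1 M a b k)
  show ?case
  proof (cases "M < k")
    case True then show ?thesis by (simp add: mu.simps)
  next
    case False
    define x where "x = lam M a (Suc k)"
    have x: "0 \<le> x" "x \<le> 1" using lam_bounds "1.prems" x_def by blast+
    have ak: "0 < a k" "a k \<le> 1" using "1.prems" by auto
    have pos: "2 - a k * x \<ge> 1" using x ak by (smt (verit) mult_le_one)
    have "0 \<le> mu M a b (Suc k)" using 1 False by auto
    moreover have "0 \<le> b k" using "1.prems" by auto
    ultimately have "0 \<le> (2 * b k + a k * mu M a b (Suc k)) / (2 - a k * x)"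
      using pos ak by (intro divide_nonneg_nonneg) auto
    thus ?thesis using False by (simp add: mu.simps[of M a b k] x_def)
  qed
qed

lemma mu_step:
  assumes a: "\<And>k. 0 < a k \<and> a k \<le> 1" and b: "\<And>k. 0 \<le> b k" and k: "k \<le> M"
  shows "mu M a b k \<ge> lam M a k * (mu M a b (Suc k) + 2 * b k)"
proof -
  define x where "x = lam M a (Suc k)"
  define y where "y = mu M a b (Suc k)"
  have x: "0 \<le> x" "x \<le> 1" using lam_bounds[OF a] x_def by auto
  have y: "0 \<le> y" using mu_nonneg[OF a b] y_def by auto
  have ak: "0 < a k" "a k \<le> 1" using a by auto
  have pos: "2 - a k * x \<ge> 1" using x ak by (smt (verit) mult_le_one)
  have "a k * (y + 2 * b k) \<le> 2 * b k + a k * y"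
    using ak b[of k] by (simp add: algebra_simps mult_left_le_one_le)
  hence "a k / (2 - a k * x) * (y + 2 * b k) \<le> (2 * b k + a k * y) / (2 - a k * x)"
    using pos by (simp add: divide_right_mono)
  thus ?thesis using k by (simp add: mu.simps[of M a b k] lam.simps[of M a k] x_def y_def)
qed

definition Gp :: "nat \<Rightarrow> (nat \<Rightarrow> real) \<Rightarrow> nat \<Rightarrow> real" where
  "Gp M a k = (\<Prod>u\<in>{k..Suc M}. lam M a u)"

lemma Gp_bounds:
  assumes a: "\<And>k. 0 < a k \<and> a k \<le> 1"
  shows "0 \<le> Gp M a k \<and> Gp M a k \<le> 1"
  unfolding Gp_def using lam_bounds[OF a, of M]
  by (intro conjI prod_nonneg prod_le_1) auto

lemma Gp_Suc:
  assumes "k \<le> Suc M"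
  shows "Gp M a k = lam M a k * Gp M a (Suc k)"
  unfolding Gp_def using assms by (rule prod.atLeast_Suc_atMost)

lemma Gp_mono:
  assumes a: "\<And>k. 0 < a k \<and> a k \<le> 1" and z: "1 \<le> z"
  shows "Gp M a 1 \<le> Gp M a z"
proof -
  have sub: "{z..Suc M} \<subseteq> {1..Suc M}" using z by auto
  have "Gp M a 1 = (\<Prod>u\<in>{1..Suc M} - {z..Suc M}. lam M a u) * Gp M a z"
    unfolding Gp_def by (rule prod.subset_diff[OF sub]) simp
  moreover have "(\<Prod>u\<in>{1..Suc M} - {z..Suc M}. lam M a u) \<le> 1"
    using lam_bounds[OF a, of M] by (intro prod_le_1) auto
  moreover have "(\<Prod>u\<in>{1..Suc M} - {z..Suc M}. lam M a u) \<ge> 0"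
    using lam_bounds[OF a, of M] by (intro prod_nonneg) auto
  moreover have "0 \<le> Gp M a z" using Gp_bounds[OF a] by auto
  ultimately show ?thesis by (simp add: mult_left_le_one_le)
qed

lemma mu_lower:
  assumes a: "\<And>k. 0 < a k \<and> a k \<le> 1" and b: "\<And>k. 0 \<le> b k" and z: "z \<le> Suc M"
  shows "mu M a b z \<ge> Gp M a z * (2 * (\<Sum>w\<in>{z..M}. b w))"
  using z
proof (induction z rule: inc_induct)
  case base
  then show ?case by (simp add: mu.simps)
next
  case (step n)
  have nM: "n \<le> M" using step by auto
  define S where "S = (\<Sum>w\<in>{Suc n..M}. b w)"
  have S0: "0 \<le> S" unfolding S_def using b by (simp add: sum_nonneg)
  have G: "0 \<le> Gp M a (Suc n)" "Gp M a (Suc n) \<le> 1" using Gp_bounds[OF a] by auto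
  have l: "0 \<le> lam M a n" using lam_bounds[OF a] by auto
  have "mu M a b n \<ge> lam M a n * (mu M a b (Suc n) + 2 * b n)" using mu_step[OF a b nM] .
  moreover have "mu M a b (Suc n) + 2 * b n \<ge> Gp M a (Suc n) * (2 * S + 2 * b n)"
  proof -
    have "Gp M a (Suc n) * (2 * b n) \<le> 2 * b n" using G b[of n] by (simp add: mult_left_le_one_le)
    thus ?thesis using step S_def by (simp add: algebra_simps)
  qed
  ultimately have "mu M a b n \<ge> lam M a n * (Gp M a (Suc n) * (2 * S + 2 * b n))"
    using l by (smt (verit) mult_left_mono)
  moreover have "(\<Sum>w\<in>{n..M}. b w) = b n + S" unfolding S_def using nM
    by (simp add: sum.atLeast_Suc_atMost)
  ultimately show ?case using Gp_Suc[of n M a] nM by (simp add: algebra_simps)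
qed

lemma lam_prod:
  assumes a: "\<And>k. 0 < a k \<and> a k \<le> 1" and k: "k \<le> Suc M"
  shows "lam M a k \<ge> (\<Prod>w\<in>{k..M}. a w ^ 2)"
  using k
proof (induction k rule: inc_induct)
  case base
  then show ?case by (simp add: lam.simps)
next
  case (step n)
  have nM: "n \<le> M" using step by auto
  have "(\<Prod>w\<in>{n..M}. a w ^ 2) = a n ^ 2 * (\<Prod>w\<in>{Suc n..M}. a w ^ 2)"
    using nM by (rule prod.atLeast_Suc_atMost)
  also have "\<dots> \<le> a n ^ 2 * lam M a (Suc n)" using step by (simp add: mult_left_mono)
  also have "\<dots> \<le> lam M a n" using lam_step[OF a nM] .
  finally show ?case .
qed

lemma Gp_exp_bound:
  assumes a: "\<And>k. 0 < a k \<and> a k \<le> 1" and q: "\<And>w. 1 \<le> w \<Longrightarrow> a w ^ 2 \<ge> exp (- q w)"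
  shows "Gp M a 1 \<ge> exp (- (\<Sum>k\<in>{1..Suc M}. \<Sum>w\<in>{k..M}. q w))"
proof -
  have "exp (- (\<Sum>k\<in>{1..Suc M}. \<Sum>w\<in>{k..M}. q w)) = (\<Prod>k\<in>{1..Suc M}. \<Prod>w\<in>{k..M}. exp (- q w))"
    by (simp add: exp_sum sum_negf[symmetric])
  also have "\<dots> \<le> (\<Prod>k\<in>{1..Suc M}. \<Prod>w\<in>{k..M}. a w ^ 2)"
    by (intro prod_mono conjI prod_nonneg) (use q in auto)
  also have "\<dots> \<le> (\<Prod>k\<in>{1..Suc M}. lam M a k)"
    by (intro prod_mono conjI prod_nonneg lam_prod[OF a]) auto
  finally show ?thesis unfolding Gp_def .
qed

lemma double_count:
  "2 * (\<Sum>k\<in>{1..Suc M}. \<Sum>w\<in>{k..M}. if w \<le> s then 1 else 0 :: real)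
     = real (min s M) * (real (min s M) + 1)"
proof (induction M)
  case 0
  then show ?case by simp
next
  case (Suc M)
  have "(\<Sum>k\<in>{1..Suc (Suc M)}. \<Sum>w\<in>{k..Suc M}. if w \<le> s then 1 else 0 :: real)
     = (\<Sum>k\<in>{1..Suc M}. \<Sum>w\<in>{k..Suc M}. if w \<le> s then 1 else 0 :: real)"
    by (subst (1) sum.cl_ivl_Suc) simp
  also have "\<dots> = (\<Sum>k\<in>{1..Suc M}. (\<Sum>w\<in>{k..M}. if w \<le> s then 1 else 0 :: real) + (if Suc M \<le> s then 1 else 0))"
    by (intro sum.cong refl) auto
  also have "\<dots> = (\<Sum>k\<in>{1..Suc M}. \<Sum>w\<in>{k..M}. if w \<le> s then 1 else 0 :: real) + real (Suc M) * (if Suc M \<le> s then 1 else 0)"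
    by (simp add: sum.distrib)
  finally show ?case using Suc by (cases "Suc M \<le> s"; cases "s = Suc M") (auto simp: min_def algebra_simps)
qed

context
  fixes M :: nat and a b f :: "nat \<Rightarrow> real"
  assumes a: "\<And>k. 0 < a k \<and> a k \<le> 1" and b: "\<And>k. 0 \<le> b k" and f0: "\<And>k. 0 \<le> f k"
  and top: "f (Suc M) = f M"
  and rec: "\<And>k. 1 \<le> k \<Longrightarrow> k \<le> M \<Longrightarrow> f k = b k + a k * (f (Suc k) + f (k - 1)) / 2"
begin

lemma local_bound:
  assumes "1 \<le> k" "k \<le> Suc M"
  shows "f k \<ge> lam M a k * f (k - 1) + mu M a b k"
  using assms(2,1)
proof (induction k rule: inc_induct)
  case base
  then show ?case using top by (simp add: lam.simps mu.simps)
next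
  case (step k)
  define x where "x = lam M a (Suc k)"
  define y where "y = mu M a b (Suc k)"
  have x: "0 \<le> x" "x \<le> 1" using lam_bounds[OF a] x_def by auto
  have y: "0 \<le> y" using mu_nonneg[OF a b] y_def by auto
  have ak: "0 < a k" "a k \<le> 1" using a by auto
  have pos: "2 - a k * x \<ge> 1" using x ak by (smt (verit) mult_le_one)
  have IH: "f (Suc k) \<ge> x * f k + y" using step x_def y_def by auto
  have kM: "k \<le> M" using step by auto
  have r: "f k = b k + a k * (f (Suc k) + f (k - 1)) / 2" using rec step kM by auto
  have "f k \<ge> b k + a k * (x * f k + y + f (k - 1)) / 2"
    using r IH ak by (smt (verit, best) divide_right_mono mult_left_mono)
  hence "(2 - a k * x) * f k \<ge> 2 * b k + a k * y + a k * f (k - 1)"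
    by (simp add: algebra_simps field_simps)
  hence "f k \<ge> (2 * b k + a k * y + a k * f (k - 1)) / (2 - a k * x)"
    using pos by (simp add: divide_le_eq mult.commute)
  also have "(2 * b k + a k * y + a k * f (k - 1)) / (2 - a k * x)
     = a k / (2 - a k * x) * f (k - 1) + (2 * b k + a k * y) / (2 - a k * x)"
    by (simp add: add_divide_distrib algebra_simps)
  finally show ?case using kM by (simp add: mu.simps[of M a b k] lam.simps[of M a k] x_def y_def)
qed

lemma chain:
  assumes "k \<le> Suc M"
  shows "f (Suc M) \<ge> Gp M a (Suc k) * f k + (\<Sum>z\<in>{Suc k..Suc M}. Gp M a (Suc z) * mu M a b z)"
  using assms
proof (induction k rule: inc_induct)
  case base
  then show ?case by (simp add: Gp_def)
next
  case (step n)
  have loc: "f (Suc n) \<ge> lam M a (Suc n) * f n + mu M a b (Suc n)"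
    using local_bound[of "Suc n"] step by auto
  have G: "0 \<le> Gp M a (Suc (Suc n))" using Gp_bounds[OF a] by auto
  have "Gp M a (Suc (Suc n)) * f (Suc n) \<ge> Gp M a (Suc (Suc n)) * (lam M a (Suc n) * f n + mu M a b (Suc n))"
    using loc G by (simp add: mult_left_mono)
  moreover have "Gp M a (Suc n) = lam M a (Suc n) * Gp M a (Suc (Suc n))"
    using Gp_Suc[of "Suc n" M a] step by auto
  moreover have "(\<Sum>z\<in>{Suc n..Suc M}. Gp M a (Suc z) * mu M a b z) =
     Gp M a (Suc (Suc n)) * mu M a b (Suc n) + (\<Sum>z\<in>{Suc (Suc n)..Suc M}. Gp M a (Suc z) * mu M a b z)"
    using step by (intro sum.atLeast_Suc_atMost) auto
  ultimately show ?case using step.IH by (simp add: algebra_simps)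
qed

lemma final_analytic:
  "f (Suc M) \<ge> Gp M a 1 ^ 2 * (f 0 + 2 * (\<Sum>z\<in>{1..Suc M}. \<Sum>w\<in>{z..M}. b w))"
proof -
  have c: "f (Suc M) \<ge> Gp M a 1 * f 0 + (\<Sum>z\<in>{1..Suc M}. Gp M a (Suc z) * mu M a b z)"
    using chain[of 0] by simp
  have G1: "0 \<le> Gp M a 1" "Gp M a 1 \<le> 1" using Gp_bounds[OF a] by auto
  have "Gp M a 1 ^ 2 * f 0 \<le> Gp M a 1 * f 0"
    using G1 f0[of 0] by (simp add: power2_eq_square mult_left_le_one_le mult.assoc mult_le_cancel_left1)
  moreover have "(\<Sum>z\<in>{1..Suc M}. Gp M a 1 ^ 2 * (2 * (\<Sum>w\<in>{z..M}. b w)))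
       \<le> (\<Sum>z\<in>{1..Suc M}. Gp M a (Suc z) * mu M a b z)"
  proof (rule sum_mono)
    fix z assume z: "z \<in> {1..Suc M}"
    define S where "S = 2 * (\<Sum>w\<in>{z..M}. b w)"
    have S0: "0 \<le> S" unfolding S_def using b by (simp add: sum_nonneg)
    have m: "mu M a b z \<ge> Gp M a z * S" using mu_lower[OF a b] z S_def by auto
    have g: "Gp M a 1 \<le> Gp M a z" "Gp M a 1 \<le> Gp M a (Suc z)" using Gp_mono[OF a] z by auto
    have "Gp M a 1 * S \<le> mu M a b z" using m g S0 by (smt (verit) mult_right_mono)
    hence "Gp M a 1 * (Gp M a 1 * S) \<le> Gp M a (Suc z) * mu M a b z"
      using g G1 S0 by (smt (verit) mult_mono mult_nonneg_nonneg)
    thus "Gp M a 1 ^ 2 * S \<le> Gp M a (Suc z) * mu M a b z" by (simp add: power2_eq_square mult.assoc)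
  qed
  ultimately show ?thesis using c by (simp add: sum_distrib_left algebra_simps)
qed

end




definition Ev :: "nat \<Rightarrow> (nat \<Rightarrow> nat) \<Rightarrow> nat \<Rightarrow> int \<Rightarrow> (nat \<times> int) stream set" where
  "Ev N \<sigma> i z = {\<omega> \<in> space (explorer_space N). \<exists>n.
     (\<forall>m<n. z + (\<Sum>k<m. snd (\<omega> !! k)) > int (\<sigma> (fst (\<omega> !! m)))) \<and>
     z + (\<Sum>k<n. snd (\<omega> !! k)) \<le> int (\<sigma> (fst (\<omega> !! n))) \<and> fst (\<omega> !! n) = i}"

lemma space_explorer: "space (explorer_space N) = UNIV"
  by (simp add: explorer_space_def space_stream_space)

lemma attach_Ev: "attach_event N \<sigma> i = Ev N \<sigma> i (int (Max (\<sigma> ` {1..N})) + 1)"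
  unfolding attach_event_def Ev_def explorer_Z_def explorer_X_def by simp

lemma Ev_shift:
  "(x ## \<omega>) \<in> Ev N \<sigma> i z \<longleftrightarrow>
     (z \<le> int (\<sigma> (fst x)) \<and> fst x = i) \<or> (int (\<sigma> (fst x)) < z \<and> \<omega> \<in> Ev N \<sigma> i (z + snd x))"
proof -
  have S: "\<And>m. (\<Sum>k<Suc m. snd ((x ## \<omega>) !! k)) = snd x + (\<Sum>k<m. snd (\<omega> !! k))"
    unfolding sum.lessThan_Suc_shift by simp
  show ?thesis
  proof
    assume "x ## \<omega> \<in> Ev N \<sigma> i z"
    then obtain n where n1: "\<forall>m<n. z + (\<Sum>k<m. snd ((x ## \<omega>) !! k)) > int (\<sigma> (fst ((x ## \<omega>) !! m)))"
      and n2: "z + (\<Sum>k<n. snd ((x ## \<omega>) !! k)) \<le> int (\<sigma> (fst ((x ## \<omega>) !! n)))"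
      and n3: "fst ((x ## \<omega>) !! n) = i"
      unfolding Ev_def by blast
    show "(z \<le> int (\<sigma> (fst x)) \<and> fst x = i) \<or> (int (\<sigma> (fst x)) < z \<and> \<omega> \<in> Ev N \<sigma> i (z + snd x))"
    proof (cases n)
      case 0
      then show ?thesis using n2 n3 by simp
    next
      case (Suc n')
      have "int (\<sigma> (fst x)) < z" using n1[rule_format, of 0] Suc by simp
      moreover have "\<omega> \<in> Ev N \<sigma> i (z + snd x)"
        unfolding Ev_def space_explorer
      proof (intro CollectI conjI UNIV_I exI[of _ n'] allI impI)
        fix m assume "m < n'"
        then show "z + snd x + (\<Sum>k<m. snd (\<omega> !! k)) > int (\<sigma> (fst (\<omega> !! m)))"
          using n1[rule_format, of "Suc m"] Suc S[of m] by (simp add: add.assoc)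
      next
        show "z + snd x + (\<Sum>k<n'. snd (\<omega> !! k)) \<le> int (\<sigma> (fst (\<omega> !! n')))"
          using n2 Suc S[of n'] by (simp add: add.assoc)
      next
        show "fst (\<omega> !! n') = i" using n3 Suc by simp
      qed
      ultimately show ?thesis by blast
    qed
  next
    assume "(z \<le> int (\<sigma> (fst x)) \<and> fst x = i) \<or> (int (\<sigma> (fst x)) < z \<and> \<omega> \<in> Ev N \<sigma> i (z + snd x))"
    then show "x ## \<omega> \<in> Ev N \<sigma> i z"
    proof
      assume "z \<le> int (\<sigma> (fst x)) \<and> fst x = i"
      then show ?thesis unfolding Ev_def space_explorer
        by (intro CollectI conjI UNIV_I exI[of _ 0]) auto
    next
      assume A: "int (\<sigma> (fst x)) < z \<and> \<omega> \<in> Ev N \<sigma> i (z + snd x)"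
      then obtain n where n1: "\<forall>m<n. z + snd x + (\<Sum>k<m. snd (\<omega> !! k)) > int (\<sigma> (fst (\<omega> !! m)))"
        and n2: "z + snd x + (\<Sum>k<n. snd (\<omega> !! k)) \<le> int (\<sigma> (fst (\<omega> !! n)))"
        and n3: "fst (\<omega> !! n) = i"
        unfolding Ev_def by blast
      show ?thesis unfolding Ev_def space_explorer
      proof (intro CollectI conjI UNIV_I exI[of _ "Suc n"] allI impI)
        fix m assume m: "m < Suc n"
        show "z + (\<Sum>k<m. snd ((x ## \<omega>) !! k)) > int (\<sigma> (fst ((x ## \<omega>) !! m)))"
        proof (cases m)
          case 0 then show ?thesis using A by simp
        next
          case (Suc m')
          then show ?thesis using n1[rule_format, of m'] m S[of m'] by (simp add: add.assoc)
        qed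
      next
        show "z + (\<Sum>k<Suc n. snd ((x ## \<omega>) !! k)) \<le> int (\<sigma> (fst ((x ## \<omega>) !! Suc n)))"
          using n2 S[of n] by (simp add: add.assoc)
      next
        show "fst ((x ## \<omega>) !! Suc n) = i" using n3 by simp
      qed
    qed
  qed
qed

lemma Ev_sets: "Ev N \<sigma> i z \<in> sets (explorer_space N)"
proof -
  define Q where "Q n xs = ((\<forall>m<n. z + (\<Sum>k<m. snd (xs ! k)) > int (\<sigma> (fst (xs ! m)))) \<and>
     z + (\<Sum>k<n. snd (xs ! k)) \<le> int (\<sigma> (fst (xs ! n))) \<and> fst (xs ! n) = i)"
    for n and xs :: "(nat \<times> int) list"
  have eq: "Ev N \<sigma> i z = {\<omega> \<in> space (explorer_space N). \<exists>n. Q n (stake (Suc n) \<omega>)}"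
    unfolding Ev_def Q_def by (simp del: stake.simps add: stake_nth)
  have ms: "stake n \<in> measurable (explorer_space N) (count_space UNIV)" for n
  proof -
    have "sets (explorer_space N) = sets (stream_space (count_space UNIV))"
      unfolding explorer_space_def by (intro sets_stream_space_cong) simp
    then show ?thesis using measurable_stake[of n] by (simp add: measurable_cong_sets)
  qed
  have [measurable]: "Measurable.pred (explorer_space N) (\<lambda>\<omega>. Q n (stake (Suc n) \<omega>))" for n
    using measurable_compose[OF ms[of "Suc n"], of "Q n" "count_space UNIV"] by simp
  show ?thesis unfolding eq by measurable
qed

lemma aux_eq: "((if P then 1 else 0) + K * ((x + y) / 2)) / N = (if P then 1 / N else 0) + K / N * (x + y) / 2"
  for K x y N :: real
  by (simp add: add_divide_distrib algebra_simps)

lemma u_rec: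
  fixes N :: nat and \<sigma> :: "nat \<Rightarrow> nat" and i :: nat and z :: int
  assumes N2: "2 \<le> N" and iN: "i \<in> {1..N}"
  defines "u \<equiv> \<lambda>z. measure (explorer_space N) (Ev N \<sigma> i z)"
  shows "u z = (if z \<le> int (\<sigma> i) then 1 / real N else 0)
     + real (card {j\<in>{1..N}. int (\<sigma> j) < z}) / real N * (u (z + 1) + u (z - 1)) / 2"
proof -
  define p0 where "p0 = pair_pmf (pmf_of_set {1..N}) (pmf_of_set {-1, 1::int})"
  have Om: "explorer_space N = stream_space (measure_pmf p0)" unfolding explorer_space_def p0_def ..
  define g where "g t = (if z \<le> int (\<sigma> (fst t)) then (if fst t = i then 1 else 0) else u (z + snd t))"
    for t :: "nat \<times> int"
  have g0: "0 \<le> g t" for t unfolding g_def u_def by auto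
  have meas: "{x \<in> space (stream_space (measure_pmf p0)). x \<in> Ev N \<sigma> i z} \<in> sets (stream_space (measure_pmf p0))"
    using Ev_sets[of N \<sigma> i z] unfolding Om[symmetric] space_explorer by simp
  have "ennreal (\<P>(x in stream_space (measure_pmf p0). x \<in> Ev N \<sigma> i z))
      = (\<integral>\<^sup>+t. \<P>(x in stream_space (measure_pmf p0). t ## x \<in> Ev N \<sigma> i z) \<partial>measure_pmf p0)"
    by (rule prob_space.prob_stream_space[OF prob_space_measure_pmf meas])
  also have "\<dots> = (\<integral>\<^sup>+t. ennreal (g t) \<partial>measure_pmf p0)"
  proof (intro nn_integral_cong arg_cong[where f=ennreal])
    fix t :: "nat \<times> int"
    have "{x \<in> space (stream_space (measure_pmf p0)). t ## x \<in> Ev N \<sigma> i z} =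
      (if z \<le> int (\<sigma> (fst t)) then (if fst t = i then space (explorer_space N) else {}) else Ev N \<sigma> i (z + snd t))"
      unfolding Ev_shift Om[symmetric] space_explorer by (auto simp: Ev_def space_explorer)
    moreover have "prob_space (explorer_space N)" unfolding Om by (rule prob_space.prob_space_stream_space[OF prob_space_measure_pmf])
    ultimately show "\<P>(x in stream_space (measure_pmf p0). t ## x \<in> Ev N \<sigma> i z) = g t"
      unfolding g_def u_def Om[symmetric] by (simp add: prob_space.prob_space)
  qed
  also have "\<dots> = (\<integral>\<^sup>+a. \<integral>\<^sup>+b. ennreal (g (a, b)) \<partial>measure_pmf (pmf_of_set {-1, 1::int}) \<partial>measure_pmf (pmf_of_set {1..N}))"
    unfolding p0_def by (rule nn_integral_pair_pmf')
  also have "\<dots> = ennreal ((\<Sum>a\<in>{1..N}. (g (a, -1) + g (a, 1)) / 2) / real N)"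
  proof -
    have h: "(ennreal (g (a, -1)) + ennreal (g (a, 1))) / 2 = ennreal ((g (a, -1) + g (a, 1)) / 2)" for a
    proof -
      have "ennreal (g (a, -1)) + ennreal (g (a, 1)) = ennreal (g (a, -1) + g (a, 1))"
        using g0 by (simp add: ennreal_plus)
      moreover have "ennreal (g (a, -1) + g (a, 1)) / 2 = ennreal ((g (a, -1) + g (a, 1)) / 2)"
        using divide_ennreal[of "g (a, -1) + g (a, 1)" 2] g0 by (simp add: add_nonneg_nonneg)
      ultimately show ?thesis by simp
    qed
    have s: "(\<Sum>a\<in>{1..N}. ennreal ((g (a, -1) + g (a, 1)) / 2)) = ennreal (\<Sum>a\<in>{1..N}. (g (a, -1) + g (a, 1)) / 2)"
      using g0 by (intro sum_ennreal) (simp add: add_nonneg_nonneg)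
    have "ennreal (\<Sum>a\<in>{1..N}. (g (a, -1) + g (a, 1)) / 2) / ennreal (real N) = ennreal ((\<Sum>a\<in>{1..N}. (g (a, -1) + g (a, 1)) / 2) / real N)"
      using N2 g0 by (intro divide_ennreal) (auto intro!: sum_nonneg add_nonneg_nonneg)
    then show ?thesis
      using N2 s by (simp add: nn_integral_pmf_of_set h ennreal_of_nat_eq_real_of_nat del: sum_ennreal)
  qed
  moreover have "{x \<in> space (stream_space (measure_pmf p0)). x \<in> Ev N \<sigma> i z} = Ev N \<sigma> i z"
    by (simp add: Om[symmetric] space_explorer)
  ultimately have E: "u z = (\<Sum>a\<in>{1..N}. (g (a, -1) + g (a, 1)) / 2) / real N"
    unfolding u_def Om using g0 by (simp add: sum_nonneg ennreal_inj)
  define c where "c = (u (z + 1) + u (z - 1)) / 2"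
  have "(\<Sum>a\<in>{1..N}. (g (a, -1) + g (a, 1)) / 2) =
     (\<Sum>a\<in>{1..N}. if z \<le> int (\<sigma> a) then (if a = i then 1 else 0) else c)"
    by (intro sum.cong refl) (auto simp: g_def c_def)
  also have "\<dots> = (\<Sum>a\<in>{1..N} \<inter> {a. z \<le> int (\<sigma> a)}. if a = i then 1 else 0)
      + (\<Sum>a\<in>{1..N} \<inter> - {a. z \<le> int (\<sigma> a)}. c)"
    by (rule sum.If_cases) simp
  also have "(\<Sum>a\<in>{1..N} \<inter> {a. z \<le> int (\<sigma> a)}. if a = i then 1 else 0) = (if z \<le> int (\<sigma> i) then 1 else (0::real))"
    using iN by (subst sum.delta) auto
  also have "{1..N} \<inter> - {a. z \<le> int (\<sigma> a)} = {j\<in>{1..N}. int (\<sigma> j) < z}" by auto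
  finally have F: "(\<Sum>a\<in>{1..N}. (g (a, -1) + g (a, 1)) / 2) = (if z \<le> int (\<sigma> i) then 1 else 0)
      + real (card {j\<in>{1..N}. int (\<sigma> j) < z}) * c" by simp
  show ?thesis unfolding E F c_def by (rule aux_eq)
qed



lemma bounded_harmonic:
  fixes f :: "nat \<Rightarrow> real"
  assumes h: "\<And>k. M < k \<Longrightarrow> f k = (f (Suc k) + f (k - 1)) / 2"
    and lo: "\<And>k. 0 \<le> f k" and hi: "\<And>k. f k \<le> 1"
  shows "f (Suc M) = f M"
proof (rule ccontr)
  assume ne: "f (Suc M) \<noteq> f M"
  define d where "d = f (Suc M) - f M"
  have lin: "f (M + n) = f M + real n * d \<and> f (M + Suc n) = f M + real (Suc n) * d" for n
  proof (induction n)
    case 0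
    then show ?case by (simp add: d_def)
  next
    case (Suc n)
    have "f (M + Suc n) = (f (Suc (M + Suc n)) + f (M + n)) / 2"
      using h[of "M + Suc n"] by simp
    then have "f (M + Suc (Suc n)) = 2 * f (M + Suc n) - f (M + n)" by simp
    then show ?case using Suc by (simp add: algebra_simps)
  qed
  show False
  proof (cases "d > 0")
    case True
    obtain n where n: "2 < real n * d" using reals_Archimedean3[OF True] by blast
    have "f (M + n) > 1" using lin[of n] lo[of M] n by linarith
    then show False using hi[of "M + n"] by linarith
  next
    case False
    then have "-d > 0" using ne d_def by auto
    then obtain n where n: "2 < real n * (-d)" using reals_Archimedean3 by blast
    have "f (M + n) < 0" using lin[of n] hi[of M] n by (simp add: algebra_simps)
    then show False using lo[of "M + n"] by linarith
  qed
qed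

lemma main_ineq:
  fixes N :: nat and \<sigma> :: "nat \<Rightarrow> nat" and i :: nat
  assumes N2: "2 \<le> N" and iN: "i \<in> {1..N}" and small: "real (\<Sum>j=1..N. \<sigma> j) < real N / 2"
  shows "1 * (real (\<sigma> i) ^ 2 + 1) / real N *
         exp (- (3 / real N) * (\<Sum>j=1..N. real (\<sigma> j) * (real (\<sigma> j) + 1))
                * (1 + 2 * real (\<Sum>j=1..N. \<sigma> j) / real N)) \<le> attach_prob N \<sigma> i"
proof -
  define A where "A = {1..N}"
  have Afin: "finite A" and Ane: "A \<noteq> {}" using N2 by (auto simp: A_def)
  define S where "S = (\<Sum>j=1..N. \<sigma> j)"
  define q where "q = real S / real N"
  have Npos: "real N > 0" using N2 by simp
  have q0: "0 \<le> q" and q2: "q < 1/2" using small Npos by (auto simp: q_def S_def field_simps sum_nonneg)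
  define M where "M = Max (\<sigma> ` A)"
  have sM: "\<And>j. j \<in> A \<Longrightarrow> \<sigma> j \<le> M" unfolding M_def using Afin by auto
  define h where "h = \<sigma> i"
  have hM: "h \<le> M" using sM iN by (simp add: h_def A_def)
  define u where "u = (\<lambda>z. measure (explorer_space N) (Ev N \<sigma> i z))"
  have PS: "prob_space (explorer_space N)" unfolding explorer_space_def
    by (rule prob_space.prob_space_stream_space[OF prob_space_measure_pmf])
  have u01: "0 \<le> u z" "u z \<le> 1" for z unfolding u_def using prob_space.prob_le_1[OF PS] by auto
  have urec: "u z = (if z \<le> int (\<sigma> i) then 1 / real N else 0)
     + real (card {j\<in>A. int (\<sigma> j) < z}) / real N * (u (z + 1) + u (z - 1)) / 2" for z
    using u_rec[OF N2 iN, of \<sigma> z] unfolding u_def A_def .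
  define f where "f k = u (int k)" for k
  define pw where "pw k = real (card {j\<in>A. k \<le> \<sigma> j}) / real N" for k
  define aa where "aa k = (if k = 0 then 1 else real (card {j\<in>A. int (\<sigma> j) < int k}) / real N)" for k
  define bb where "bb k = (if k \<le> h then 1 / real N else 0)" for k
  have cardsplit: "real (card {j\<in>A. int (\<sigma> j) < int k}) = real N - real (card {j\<in>A. k \<le> \<sigma> j})" for k
  proof -
    have "{j\<in>A. int (\<sigma> j) < int k} \<union> {j\<in>A. k \<le> \<sigma> j} = A" by auto
    moreover have "{j\<in>A. int (\<sigma> j) < int k} \<inter> {j\<in>A. k \<le> \<sigma> j} = {}" by auto
    ultimately have "card {j\<in>A. int (\<sigma> j) < int k} + card {j\<in>A. k \<le> \<sigma> j} = card A"
      using Afin by (metis (no_types, lifting) card_Un_disjoint finite_Un)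
    then show ?thesis by (simp add: A_def)
  qed
  have aa_eq: "aa k = 1 - pw k" if "1 \<le> k" for k
    using that cardsplit[of k] Npos by (simp add: aa_def pw_def field_simps)
  have pw_q: "0 \<le> pw k \<and> pw k \<le> q" if "1 \<le> k" for k
  proof -
    have "card {j\<in>A. k \<le> \<sigma> j} = (\<Sum>j\<in>{j\<in>A. k \<le> \<sigma> j}. 1)" by simp
    also have "\<dots> \<le> (\<Sum>j\<in>{j\<in>A. k \<le> \<sigma> j}. \<sigma> j)" using that by (intro sum_mono) auto
    also have "\<dots> \<le> (\<Sum>j\<in>A. \<sigma> j)" using Afin by (intro sum_mono2) auto
    finally have "card {j\<in>A. k \<le> \<sigma> j} \<le> S" by (simp add: S_def A_def)
    then show ?thesis using Npos by (simp add: pw_def q_def divide_right_mono)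
  qed
  have aa_b: "0 < aa k \<and> aa k \<le> 1" for k
  proof (cases "k = 0")
    case True then show ?thesis by (simp add: aa_def)
  next
    case False
    then show ?thesis using aa_eq[of k] pw_q[of k] q2 by auto
  qed
  have bb_b: "0 \<le> bb k" for k by (simp add: bb_def)
  have f0: "0 \<le> f k" for k using u01 by (simp add: f_def)
  have f_0: "f 0 = 1 / real N"
    using urec[of 0] by (simp add: f_def)
  have frec: "f k = bb k + aa k * (f (Suc k) + f (k - 1)) / 2" if "1 \<le> k" for k
  proof -
    have e1: "int k + 1 = int (Suc k)" by simp
    have e2: "int k - 1 = int (k - 1)" using that by simp
    show ?thesis using urec[of "int k"] that unfolding f_def e1 e2
      by (simp add: aa_def bb_def h_def)
  qed
  have top: "f (Suc M) = f M"
  proof (rule bounded_harmonic)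
    fix k assume k: "M < k"
    have "{j\<in>A. k \<le> \<sigma> j} = {}" using sM k by (force dest: sM)
    then have "card {j\<in>A. k \<le> \<sigma> j} = 0" by (simp only: card.empty)
    then have "aa k = 1" using aa_eq[of k] k by (simp add: pw_def)
    moreover have "bb k = 0" using hM k by (simp add: bb_def)
    ultimately show "f k = (f (Suc k) + f (k - 1)) / 2" using frec[of k] k by simp
  qed (use u01 in \<open>auto simp: f_def\<close>)
  have main: "f (Suc M) \<ge> Gp M aa 1 ^ 2 * (f 0 + 2 * (\<Sum>z\<in>{1..Suc M}. \<Sum>w\<in>{z..M}. bb w))"
    by (rule final_analytic[OF aa_b bb_b f0 top frec]) auto
  have dc_b: "2 * (\<Sum>z\<in>{1..Suc M}. \<Sum>w\<in>{z..M}. bb w) = real h * (real h + 1) / real N"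
  proof -
    have "(\<Sum>z\<in>{1..Suc M}. \<Sum>w\<in>{z..M}. bb w) = (\<Sum>z\<in>{1..Suc M}. \<Sum>w\<in>{z..M}. (if w \<le> h then 1 else 0) / real N)"
      by (intro sum.cong refl) (simp add: bb_def)
    also have "\<dots> = (\<Sum>z\<in>{1..Suc M}. \<Sum>w\<in>{z..M}. (if w \<le> h then 1 else 0 :: real)) / real N"
      by (simp add: sum_divide_distrib)
    finally have X: "(\<Sum>z\<in>{1..Suc M}. \<Sum>w\<in>{z..M}. bb w) = (\<Sum>z\<in>{1..Suc M}. \<Sum>w\<in>{z..M}. (if w \<le> h then 1 else 0 :: real)) / real N" .
    have dc: "2 * (\<Sum>z\<in>{1..Suc M}. \<Sum>w\<in>{z..M}. (if w \<le> h then 1 else 0 :: real)) = real h * (real h + 1)"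
      using double_count[of h M] by (simp only: min_absorb1[OF hM])
    show ?thesis unfolding X using dc by (metis times_divide_eq_right)
  qed
  have dc_p: "2 * (\<Sum>z\<in>{1..Suc M}. \<Sum>w\<in>{z..M}. pw w) = (\<Sum>j=1..N. real (\<sigma> j) * (real (\<sigma> j) + 1)) / real N"
  proof -
    have "(\<Sum>z\<in>{1..Suc M}. \<Sum>w\<in>{z..M}. pw w)
       = (\<Sum>z\<in>{1..Suc M}. \<Sum>w\<in>{z..M}. (\<Sum>j\<in>A. if w \<le> \<sigma> j then 1 else 0 :: real) / real N)"
    proof -
      have cs: "real (card {j\<in>A. w \<le> \<sigma> j}) = (\<Sum>j\<in>A. if w \<le> \<sigma> j then 1 else 0 :: real)" for w
        using sum.inter_filter[OF Afin, of "\<lambda>_. 1::real" "\<lambda>j. w \<le> \<sigma> j"] by simp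
      show ?thesis unfolding pw_def cs ..
    qed
    also have "\<dots> = (\<Sum>z\<in>{1..Suc M}. \<Sum>w\<in>{z..M}. \<Sum>j\<in>A. (if w \<le> \<sigma> j then 1 else 0 :: real)) / real N"
      by (simp add: sum_divide_distrib)
    also have "(\<Sum>z\<in>{1..Suc M}. \<Sum>w\<in>{z..M}. \<Sum>j\<in>A. (if w \<le> \<sigma> j then 1 else 0 :: real))
       = (\<Sum>z\<in>{1..Suc M}. \<Sum>j\<in>A. \<Sum>w\<in>{z..M}. (if w \<le> \<sigma> j then 1 else 0 :: real))"
      by (intro sum.cong refl sum.swap)
    also have "\<dots> = (\<Sum>j\<in>A. \<Sum>z\<in>{1..Suc M}. \<Sum>w\<in>{z..M}. (if w \<le> \<sigma> j then 1 else 0 :: real))"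
      by (rule sum.swap)
    also have "\<dots> = (\<Sum>j\<in>A. real (\<sigma> j) * (real (\<sigma> j) + 1) / 2)"
    proof (intro sum.cong refl)
      fix j assume "j \<in> A"
      then show "(\<Sum>z\<in>{1..Suc M}. \<Sum>w\<in>{z..M}. (if w \<le> \<sigma> j then 1 else 0 :: real)) = real (\<sigma> j) * (real (\<sigma> j) + 1) / 2"
      proof -
        have "2 * (\<Sum>z\<in>{1..Suc M}. \<Sum>w\<in>{z..M}. (if w \<le> \<sigma> j then 1 else 0 :: real)) = real (\<sigma> j) * (real (\<sigma> j) + 1)"
          using double_count[of "\<sigma> j" M] by (simp only: min_absorb1[OF sM[OF \<open>j \<in> A\<close>]])
        then show ?thesis by linarith
      qed
    qed
    finally show ?thesis by (simp add: A_def sum_divide_distrib[symmetric])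
  qed
  define S2 where "S2 = (\<Sum>j=1..N. real (\<sigma> j) * (real (\<sigma> j) + 1))"
  have S20: "0 \<le> S2" unfolding S2_def by (intro sum_nonneg) auto
  have aexp: "aa w ^ 2 \<ge> exp (- (2 * (1 + 2 * q) * pw w))" if "1 \<le> w" for w
  proof -
    have p: "0 \<le> pw w" "pw w \<le> q" using pw_q that by auto
    have "- pw w - 2 * (pw w)\<^sup>2 \<le> ln (1 - pw w)"
      using p q2 by (intro ln_one_minus_pos_lower_bound) auto
    moreover have "(1 + 2 * q) * pw w \<ge> pw w + 2 * (pw w)\<^sup>2"
      using p by (simp add: power2_eq_square algebra_simps mult_right_mono)
    ultimately have "- ((1 + 2 * q) * pw w) \<le> ln (1 - pw w)" by linarith
    then have "exp (- ((1 + 2 * q) * pw w)) \<le> exp (ln (1 - pw w))" by simp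
    moreover have "0 < 1 - pw w" using p q2 by linarith
    ultimately have "exp (- ((1 + 2 * q) * pw w)) \<le> 1 - pw w" by simp
    then have "exp (- ((1 + 2 * q) * pw w)) ^ 2 \<le> (1 - pw w) ^ 2"
      by (intro power_mono) auto
    moreover have "exp (- ((1 + 2 * q) * pw w)) ^ 2 = exp (- (2 * (1 + 2 * q) * pw w))"
      by (simp add: exp_double[symmetric] power2_eq_square exp_add[symmetric])
    ultimately show ?thesis using aa_eq[OF that] by simp
  qed
  have G: "Gp M aa 1 \<ge> exp (- (\<Sum>k\<in>{1..Suc M}. \<Sum>w\<in>{k..M}. 2 * (1 + 2 * q) * pw w))"
    by (rule Gp_exp_bound[OF aa_b aexp])
  have "(\<Sum>k\<in>{1..Suc M}. \<Sum>w\<in>{k..M}. 2 * (1 + 2 * q) * pw w) = (1 + 2 * q) * (2 * (\<Sum>k\<in>{1..Suc M}. \<Sum>w\<in>{k..M}. pw w))"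
    unfolding sum_distrib_left by (intro sum.cong refl) (simp add: algebra_simps)
  also have "\<dots> = (1 + 2 * q) * S2 / real N" using dc_p by (simp add: S2_def)
  finally have G': "Gp M aa 1 \<ge> exp (- ((1 + 2 * q) * S2 / real N))" using G by simp
  have Gsq: "Gp M aa 1 ^ 2 \<ge> exp (- (3 / real N) * S2 * (1 + 2 * real S / real N))"
  proof -
    have "exp (- ((1 + 2 * q) * S2 / real N)) ^ 2 \<le> Gp M aa 1 ^ 2"
      using G' by (intro power_mono) auto
    moreover have "exp (- ((1 + 2 * q) * S2 / real N)) ^ 2 = exp (- (2 * ((1 + 2 * q) * S2 / real N)))"
      by (simp add: power2_eq_square exp_add[symmetric])
    moreover have "exp (- (3 / real N) * S2 * (1 + 2 * real S / real N)) \<le> exp (- (2 * ((1 + 2 * q) * S2 / real N)))"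
    proof -
      have "2 * ((1 + 2 * q) * S2 / real N) \<le> 3 * ((1 + 2 * q) * S2 / real N)"
        using q0 S20 Npos by (intro mult_right_mono) auto
      then show ?thesis using Npos by (simp add: q_def field_simps)
    qed
    ultimately show ?thesis by linarith
  qed
  have val: "f 0 + 2 * (\<Sum>z\<in>{1..Suc M}. \<Sum>w\<in>{z..M}. bb w) \<ge> (real h ^ 2 + 1) / real N"
    using Npos unfolding f_0 dc_b by (simp add: field_simps power2_eq_square)
  have att: "attach_prob N \<sigma> i = f (Suc M)"
    unfolding attach_prob_def attach_Ev f_def u_def M_def A_def by (simp add: add.commute)
  have "exp (- (3 / real N) * S2 * (1 + 2 * real S / real N)) * ((real h ^ 2 + 1) / real N)
       \<le> Gp M aa 1 ^ 2 * (f 0 + 2 * (\<Sum>z\<in>{1..Suc M}. \<Sum>w\<in>{z..M}. bb w))"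
    using Gsq val Npos by (intro mult_mono) auto
  then show ?thesis
    using main att by (simp add: S2_def S_def h_def mult.commute)
qed

theorem lemma2p2:
  shows "\<exists>\<kappa>D C :: real. \<kappa>D > 0 \<and> C > 0 \<and>
    (\<forall>N::nat. \<forall>\<sigma>::nat \<Rightarrow> nat. \<forall>i. N \<ge> 2 \<longrightarrow> i \<in> {1..N} \<longrightarrow>
       real (\<Sum>j=1..N. \<sigma> j) < real N / 2 \<longrightarrow>
       attach_prob N \<sigma> i \<ge>
         \<kappa>D * (real (\<sigma> i) ^ 2 + 1) / real N *
         exp (- (3 / real N) * (\<Sum>j=1..N. real (\<sigma> j) * (real (\<sigma> j) + 1))
                * (1 + C * real (\<Sum>j=1..N. \<sigma> j) / real N)))"
  apply (rule exI[of _ 1], rule exI[of _ 2])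
  using main_ineq by auto

end
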